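(* Let $\mathbb L$ be a tropical Lagrangian multi-section over a complete fan $\Sigma$, let $\tau\in\Sigma$ with a chosen splitting $\iota_\tau$, and let $\tau'$ be a lift of $\tau$. If $\mathbb L$ is separable, then its localization $\mathbb L_{\tau'}$ along $\tau'$ is also separable.
   Context: $N$ is a lattice, $M=N^*$, $\Sigma$ a complete fan in $N_{\mathbb R}$. A tropical Lagrangian multi-section over $\Sigma$ is $\mathbb L=(L,\Sigma',\mu,\pi,\varphi)$: a cone complex $\Sigma'$ with support $L$, a surjective map $\pi:L\to|\Sigma|$ mapping each cone $\sigma'\in\Sigma'$ isomorphically onto a cone of $\Sigma$, multiplicities $\mu:\Sigma'\to\mathbb Z_{>0}$ with constant total multiplicity over each point, and a continuous $\varphi$ on $L$ linear on each maximal cone $\sigma'$ with slope $m(\sigma')\in M$. $\mathbb L$ is separable if for every $\tau\in\Sigma$ and distinct lifts $\tau^{(\alpha)}\ne\tau^{(\beta)}$ of $\tau$ in $\Sigma'$, $\varphi|_{\tau^{(\alpha)}}\ne\varphi|_{\tau^{(\beta)}}$ (as functions on $\tau$ via $\pi$). Localization: for $\tau\in\Sigma$, $N_\tau=N/(\mathbb R\tau\cap N)$, $p_\tau:N\to N_\tau$, $M_\tau=\tau^\perp\cap M$, a splitting $\iota_\tau$ of $p_\tau$ with dual $\iota_\tau^*:M\to M_\tau$, quotient fan $\Sigma_\tau$ with cones $K_\tau(\sigma)=p_\tau(\sigma)$, $\sigma\supset\tau$; for a lift $\tau'$ of $\tau$, $\mathbb L_{\tau'}$ is the tropical Lagrangian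 multi-section over $\Sigma_\tau$ with cones $K_\tau(\sigma)\times\{\iota_\tau^*m(\sigma')\}$ for cones $\sigma'\supset\tau'$ over $\sigma$, glued along common faces over $\Sigma_\tau$, multiplicity $\mu(\sigma')$, and piecewise linear function of slope $\iota_\tau^*m(\sigma')$ on the cone indexed by $\sigma'$. *)

theory Defs
  imports "HOL-Analysis.Analysis"
begin

text \<open>The lattice N is modelled as the integer points of real^'n; the dual lattice M is
  identified with the integer points of real^'n via the standard inner product.\<close>

definition lattice_vec :: "real^'n \<Rightarrow> bool" where
  "lattice_vec v \<longleftrightarrow> (\<forall>i. v $ i \<in> \<int>)"

definition rat_cone :: "(real^'n) set \<Rightarrow> bool" where
  "rat_cone \<sigma> \<longleftrightarrow> (\<exists>S. finite S \<and> (\<forall>v\<in>S. lattice_vec v) \<and>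
      \<sigma> = {x. \<exists>c. (\<forall>v\<in>S. c v \<ge> 0) \<and> x = (\<Sum>v\<in>S. c v *\<^sub>R v)})"

definition fan :: "(real^'n) set set \<Rightarrow> bool" where
  "fan \<Sigma> \<longleftrightarrow> finite \<Sigma>
     \<and> (\<forall>\<sigma>\<in>\<Sigma>. rat_cone \<sigma> \<and> \<sigma> \<inter> uminus ` \<sigma> = {0})
     \<and> (\<forall>\<sigma>\<in>\<Sigma>. \<forall>\<tau>. \<tau> face_of \<sigma> \<and> \<tau> \<noteq> {} \<longrightarrow> \<tau> \<in> \<Sigma>)
     \<and> (\<forall>\<sigma>\<in>\<Sigma>. \<forall>\<sigma>2\<in>\<Sigma>. (\<sigma> \<inter> \<sigma>2) face_of \<sigma> \<and> (\<sigma> \<inter> \<sigma>2) face_of \<sigma>2)"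

definition complete_fan :: "(real^'n) set set \<Rightarrow> bool" where
  "complete_fan \<Sigma> \<longleftrightarrow> fan \<Sigma> \<and> \<Union>\<Sigma> = UNIV"

text \<open>Abstract cone complex: a finite set C of cones with face relation fle.
  prj c is the cone of the fan onto which the cone c is mapped isomorphically.\<close>
definition is_max_cone :: "'c set \<Rightarrow> ('c \<Rightarrow> 'c \<Rightarrow> bool) \<Rightarrow> 'c \<Rightarrow> bool" where
  "is_max_cone C fle s \<longleftrightarrow> s \<in> C \<and> (\<forall>d\<in>C. fle s d \<longrightarrow> d = s)"

definition tlms ::
  "(real^'n) set set \<Rightarrow> 'c set \<Rightarrow> ('c \<Rightarrow> 'c \<Rightarrow> bool) \<Rightarrow> ('c \<Rightarrow> (real^'n) set)
     \<Rightarrow> ('c \<Rightarrow> nat) \<Rightarrow> ('c \<Rightarrow> real^'n) \<Rightarrow> bool" where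
  "tlms \<Sigma> C fle prj mu m \<longleftrightarrow>
     complete_fan \<Sigma> \<and> finite C
     \<comment> \<open>face relation: a partial order on C\<close>
     \<and> (\<forall>a b. fle a b \<longrightarrow> a \<in> C \<and> b \<in> C)
     \<and> (\<forall>a\<in>C. fle a a)
     \<and> (\<forall>a b. fle a b \<and> fle b a \<longrightarrow> a = b)
     \<and> (\<forall>a b c. fle a b \<and> fle b c \<longrightarrow> fle a c)
     \<comment> \<open>two cones meet in a common face (or not at all)\<close>
     \<and> (\<forall>c1\<in>C. \<forall>c2\<in>C. (\<exists>d. fle d c1 \<and> fle d c2) \<longrightarrow>
          (\<exists>g. fle g c1 \<and> fle g c2 \<and> (\<forall>d. fle d c1 \<and> fle d c2 \<longrightarrow> fle d g)))
     \<comment> \<open>prj maps each cone isomorphically onto a cone of the fan\<close>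
     \<and> (\<forall>c\<in>C. prj c \<in> \<Sigma>
          \<and> bij_betw prj {d. fle d c} {\<rho>. \<rho> face_of prj c \<and> \<rho> \<noteq> {}}
          \<and> (\<forall>d1 d2. fle d1 c \<and> fle d2 c \<longrightarrow> (fle d1 d2 \<longleftrightarrow> prj d1 \<subseteq> prj d2)))
     \<comment> \<open>surjectivity\<close>
     \<and> (\<forall>\<sigma>\<in>\<Sigma>. \<exists>c\<in>C. prj c = \<sigma>)
     \<comment> \<open>multiplicities with constant total multiplicity\<close>
     \<and> (\<forall>c\<in>C. mu c > 0)
     \<and> (\<exists>r. \<forall>\<sigma>\<in>\<Sigma>. (\<Sum>c\<in>{c\<in>C. prj c = \<sigma>}. mu c) = r)
     \<comment> \<open>slopes in M on maximal cones, and continuity of phi\<close>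
     \<and> (\<forall>s. is_max_cone C fle s \<longrightarrow> lattice_vec (m s))
     \<and> (\<forall>s1 s2 d. is_max_cone C fle s1 \<and> is_max_cone C fle s2 \<and> fle d s1 \<and> fle d s2
          \<longrightarrow> (\<forall>x\<in>prj d. m s1 \<bullet> x = m s2 \<bullet> x))"

text \<open>Restriction of phi to a cone c, as a function on prj c: the linear function of slope
  m s for any maximal cone s containing c (well defined by continuity).\<close>
definition phi_res :: "'c set \<Rightarrow> ('c \<Rightarrow> 'c \<Rightarrow> bool) \<Rightarrow> ('c \<Rightarrow> real^'n) \<Rightarrow> 'c \<Rightarrow> real^'n \<Rightarrow> real" where
  "phi_res C fle m c x = m (SOME s. is_max_cone C fle s \<and> fle c s) \<bullet> x"

definition separable ::
  "(real^'n) set set \<Rightarrow> 'c set \<Rightarrow> ('c \<Rightarrow> 'c \<Rightarrow> bool) \<Rightarrow> ('c \<Rightarrow> (real^'n) set)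
     \<Rightarrow> ('c \<Rightarrow> real^'n) \<Rightarrow> bool" where
  "separable \<Sigma> C fle prj m \<longleftrightarrow>
     (\<forall>\<tau>\<in>\<Sigma>. \<forall>a\<in>C. \<forall>b\<in>C. prj a = \<tau> \<and> prj b = \<tau> \<and> a \<noteq> b \<longrightarrow>
        (\<exists>x\<in>\<tau>. phi_res C fle m a x \<noteq> phi_res C fle m b x))"

text \<open>Localization data. N_tau is presented as the integer lattice of real^'k via a
  surjective lattice map p with kernel the span of tau; iota is a splitting of p.\<close>
definition quotient_data :: "(real^'n) set \<Rightarrow> (real^'n \<Rightarrow> real^'k) \<Rightarrow> (real^'k \<Rightarrow> real^'n) \<Rightarrow> bool" where
  "quotient_data \<tau> p \<iota> \<longleftrightarrow>
     linear p \<and> (\<forall>v. lattice_vec v \<longrightarrow> lattice_vec (p v))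
     \<and> (\<forall>w. lattice_vec w \<longrightarrow> (\<exists>v. lattice_vec v \<and> p v = w))
     \<and> {x. p x = 0} = span \<tau>
     \<and> linear \<iota> \<and> (\<forall>w. lattice_vec w \<longrightarrow> lattice_vec (\<iota> w))
     \<and> (\<forall>y. p (\<iota> y) = y)"

text \<open>Dual of the splitting: M \<rightarrow> M_tau = Hom(N_tau, Z), m \<mapsto> m \<circ> iota.\<close>
definition dual_map :: "(real^'k \<Rightarrow> real^'n) \<Rightarrow> real^'n \<Rightarrow> real^'k" where
  "dual_map \<iota> m = (\<chi> j. m \<bullet> \<iota> (axis j 1))"

definition quotient_fan :: "(real^'n) set set \<Rightarrow> (real^'n) set \<Rightarrow> (real^'n \<Rightarrow> real^'k) \<Rightarrow> (real^'k) set set" where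
  "quotient_fan \<Sigma> \<tau> p = {p ` \<sigma> | \<sigma>. \<sigma> \<in> \<Sigma> \<and> \<tau> face_of \<sigma>}"

text \<open>Localized multi-section along a lift tau': cones of the star of tau', projected.\<close>
definition loc_cones :: "'c set \<Rightarrow> ('c \<Rightarrow> 'c \<Rightarrow> bool) \<Rightarrow> 'c \<Rightarrow> 'c set" where
  "loc_cones C fle \<tau>' = {c\<in>C. fle \<tau>' c}"

definition loc_fle :: "'c set \<Rightarrow> ('c \<Rightarrow> 'c \<Rightarrow> bool) \<Rightarrow> 'c \<Rightarrow> 'c \<Rightarrow> 'c \<Rightarrow> bool" where
  "loc_fle C fle \<tau>' a b \<longleftrightarrow> fle a b \<and> fle \<tau>' a \<and> fle \<tau>' b"

definition loc_pi :: "('c \<Rightarrow> (real^'n) set) \<Rightarrow> (real^'n \<Rightarrow> real^'k) \<Rightarrow> 'c \<Rightarrow> (real^'k) set" where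
  "loc_pi prj p c = p ` prj c"

definition loc_slope :: "('c \<Rightarrow> real^'n) \<Rightarrow> (real^'k \<Rightarrow> real^'n) \<Rightarrow> 'c \<Rightarrow> real^'k" where
  "loc_slope m \<iota> c = dual_map \<iota> (m c)"

end

theory Submission
  imports Defs
begin


lemma rc_add: assumes "rat_cone \<sigma>" "x\<in>\<sigma>" "y\<in>\<sigma>" shows "x+y\<in>\<sigma>"
proof -
  obtain S where S: "finite S" "\<sigma> = {x. \<exists>c. (\<forall>v\<in>S. c v \<ge> 0) \<and> x = (\<Sum>v\<in>S. c v *\<^sub>R v)}"
    using assms(1) unfolding rat_cone_def by blast
  obtain c where c: "\<forall>v\<in>S. c v \<ge> 0" "x = (\<Sum>v\<in>S. c v *\<^sub>R v)" using assms(2) S(2) by blast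
  obtain d where d: "\<forall>v\<in>S. d v \<ge> 0" "y = (\<Sum>v\<in>S. d v *\<^sub>R v)" using assms(3) S(2) by blast
  have "x + y = (\<Sum>v\<in>S. (c v + d v) *\<^sub>R v)" using c d by (simp add: scaleR_add_left sum.distrib)
  moreover have "\<forall>v\<in>S. c v + d v \<ge> 0" using c d by auto
  ultimately show ?thesis unfolding S(2) mem_Collect_eq by (intro exI[of _ "\<lambda>v. c v + d v"] conjI)
qed

lemma rc_scale: assumes "rat_cone \<sigma>" "x\<in>\<sigma>" "k \<ge> 0" shows "k *\<^sub>R x\<in>\<sigma>"
proof -
  obtain S where S: "finite S" "\<sigma> = {x. \<exists>c. (\<forall>v\<in>S. c v \<ge> 0) \<and> x = (\<Sum>v\<in>S. c v *\<^sub>R v)}"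
    using assms(1) unfolding rat_cone_def by blast
  obtain c where c: "\<forall>v\<in>S. c v \<ge> 0" "x = (\<Sum>v\<in>S. c v *\<^sub>R v)" using assms(2) S(2) by blast
  have "k *\<^sub>R x = (\<Sum>v\<in>S. (k * c v) *\<^sub>R v)" using c by (simp add: scaleR_sum_right)
  moreover have "\<forall>v\<in>S. k * c v \<ge> 0" using c assms(3) by auto
  ultimately show ?thesis unfolding S(2) mem_Collect_eq by (intro exI[of _ "\<lambda>v. k * c v"] conjI)
qed

lemma rc_zero: assumes "rat_cone \<sigma>" shows "0\<in>\<sigma>"
proof -
  obtain S where S: "finite S" "\<sigma> = {x. \<exists>c. (\<forall>v\<in>S. c v \<ge> 0) \<and> x = (\<Sum>v\<in>S. c v *\<^sub>R v)}"
    using assms(1) unfolding rat_cone_def by blast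
  show ?thesis unfolding S(2) mem_Collect_eq by (intro exI[of _ "\<lambda>v. 0"] conjI) auto
qed


lemma rc_span: assumes "rat_cone (\<tau>::(real^'n) set)" "z \<in> span \<tau>"
  shows "\<exists>t1\<in>\<tau>. \<exists>t2\<in>\<tau>. z = t1 - t2"
proof -
  let ?D = "{t1 - t2 |t1 t2. t1\<in>\<tau> \<and> t2\<in>\<tau>}"
  have sub: "subspace ?D"
    unfolding subspace_def
  proof (intro conjI ballI allI)
    show "0 \<in> ?D" using rc_zero[OF assms(1)] by force
  next
    fix x y assume "x \<in> ?D" "y \<in> ?D"
    then obtain a b c d where "a\<in>\<tau>" "b\<in>\<tau>" "c\<in>\<tau>" "d\<in>\<tau>" "x = a - b" "y = c - d" by blast
    then have "x + y = (a+c) - (b+d)" by simp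
    then show "x + y \<in> ?D" using rc_add[OF assms(1)] \<open>a\<in>\<tau>\<close> \<open>b\<in>\<tau>\<close> \<open>c\<in>\<tau>\<close> \<open>d\<in>\<tau>\<close> by blast
  next
    fix k :: real and x assume "x \<in> ?D"
    then obtain a b where ab: "a\<in>\<tau>" "b\<in>\<tau>" "x = a - b" by blast
    show "k *\<^sub>R x \<in> ?D"
    proof (cases "k \<ge> 0")
      case True
      then have "k *\<^sub>R x = k *\<^sub>R a - k *\<^sub>R b" using ab by (simp add: scaleR_diff_right)
      then show ?thesis using rc_scale[OF assms(1)] ab True by blast
    next
      case False
      then have "k *\<^sub>R x = (-k) *\<^sub>R b - (-k) *\<^sub>R a" using ab by (simp add: scaleR_diff_right)
      then show ?thesis using rc_scale[OF assms(1)] ab False by (metis (mono_tags, lifting) le_minus_iff linorder_linear mem_Collect_eq neg_le_0_iff_le)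
    qed
  qed
  have "\<tau> \<subseteq> ?D"
  proof
    fix t assume "t \<in> \<tau>" then have "t = t - 0" by simp
    then show "t \<in> ?D" using \<open>t\<in>\<tau>\<close> rc_zero[OF assms(1)] by blast
  qed
  then have "span \<tau> \<subseteq> ?D" using sub by (simp add: span_minimal)
  then show ?thesis using assms(2) by blast
qed


lemma dual_inner: assumes "linear (\<iota>::real^'k \<Rightarrow> real^'n)"
  shows "dual_map \<iota> v \<bullet> y = v \<bullet> \<iota> y"
proof -
  have e: "y = (\<Sum>i\<in>UNIV. y $ i *\<^sub>R axis i 1)"
    using basis_expansion[of y] by (simp add: scalar_mult_eq_scaleR)
  have "\<iota> y = (\<Sum>i\<in>UNIV. y $ i *\<^sub>R \<iota> (axis i 1))"
    by (subst e) (simp add: linear_sum[OF assms] linear_scale[OF assms])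
  then have "v \<bullet> \<iota> y = (\<Sum>i\<in>UNIV. y $ i * (v \<bullet> \<iota> (axis i 1)))"
    by (simp add: inner_sum_right)
  moreover have "dual_map \<iota> v \<bullet> y = (\<Sum>i\<in>UNIV. (v \<bullet> \<iota> (axis i 1)) * y $ i)"
    unfolding dual_map_def inner_vec_def by simp
  ultimately show ?thesis by (simp add: mult.commute)
qed

lemma exists_max:
  assumes fin: "finite C" and dom: "\<forall>a b. fle a b \<longrightarrow> a \<in> C \<and> b \<in> C"
    and refl: "\<forall>a\<in>C. fle a a"
    and anti: "\<forall>a b. fle a b \<and> fle b a \<longrightarrow> a = b"
    and tr: "\<forall>a b c. fle a b \<and> fle b c \<longrightarrow> fle a c"
    and a: "a \<in> C"
  shows "\<exists>s. is_max_cone C fle s \<and> fle a s"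
proof -
  have "\<And>a. card {e\<in>C. fle a e} = n \<Longrightarrow> a \<in> C \<Longrightarrow> \<exists>s. is_max_cone C fle s \<and> fle a s" for n
  proof (induction n rule: less_induct)
    case (less n)
    show ?case
    proof (cases "is_max_cone C fle a")
      case True then show ?thesis using refl less.prems by blast
    next
      case False
      then obtain d where d: "d \<in> C" "fle a d" "d \<noteq> a" using less.prems unfolding is_max_cone_def by blast
      have sub: "{e\<in>C. fle d e} \<subset> {e\<in>C. fle a e}"
      proof
        show "{e\<in>C. fle d e} \<subseteq> {e\<in>C. fle a e}" using d tr by blast
        have "a \<notin> {e\<in>C. fle d e}" using d anti by blast
        moreover have "a \<in> {e\<in>C. fle a e}" using less.prems refl by blast
        ultimately show "{e\<in>C. fle d e} \<noteq> {e\<in>C. fle a e}" by blast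
      qed
      have "card {e\<in>C. fle d e} < n" using psubset_card_mono[OF _ sub] fin less.prems by auto
      then obtain s where "is_max_cone C fle s" "fle d s" using less.IH d by blast
      then show ?thesis using d tr by blast
    qed
  qed
  then show ?thesis using a by blast
qed

lemma same_cone:
  fixes p :: "real^'n \<Rightarrow> real^'k"
  assumes fan: "fan \<Sigma>" and s1: "\<sigma>1 \<in> \<Sigma>" and s2: "\<sigma>2 \<in> \<Sigma>" and rt: "rat_cone \<tau>"
    and t1: "\<tau> \<subseteq> \<sigma>1" and t2: "\<tau> \<subseteq> \<sigma>2" and ker: "{x. p x = 0} = span \<tau>"
    and lin: "linear p" and eq: "p ` \<sigma>1 = p ` \<sigma>2"
  shows "\<sigma>1 \<subseteq> \<sigma>2"
proof
  fix x assume x: "x \<in> \<sigma>1"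
  have RC: "\<forall>\<sigma>\<in>\<Sigma>. rat_cone \<sigma> \<and> \<sigma> \<inter> uminus ` \<sigma> = {0}"
    using fan unfolding fan_def by (elim conjE) assumption
  have FF: "\<forall>\<sigma>\<in>\<Sigma>. \<forall>\<sigma>2\<in>\<Sigma>. (\<sigma> \<inter> \<sigma>2) face_of \<sigma> \<and> (\<sigma> \<inter> \<sigma>2) face_of \<sigma>2"
    using fan unfolding fan_def by (elim conjE) assumption
  have r1: "rat_cone \<sigma>1" and r2: "rat_cone \<sigma>2" using RC s1 s2 by auto
  have F: "(\<sigma>1 \<inter> \<sigma>2) face_of \<sigma>1" using FF s1 s2 by blast
  obtain y where y: "y \<in> \<sigma>2" "p y = p x" using eq x by (metis image_iff)
  have "p (x - y) = 0" using y linear_diff[OF lin] by simp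
  then have "x - y \<in> span \<tau>" using ker by blast
  then obtain u1 u2 where u: "u1 \<in> \<tau>" "u2 \<in> \<tau>" "x - y = u1 - u2" using rc_span[OF rt] by blast
  have zeq: "x + u2 = y + u1" using u(3) by (simp add: algebra_simps)
  have z1: "x + u2 \<in> \<sigma>1" using rc_add[OF r1 x] u t1 by blast
  have z2: "x + u2 \<in> \<sigma>2" unfolding zeq using rc_add[OF r2 y(1)] u t2 by blast
  show "x \<in> \<sigma>2"
  proof (cases "x = u2")
    case True then show ?thesis using u t2 by blast
  next
    case False
    have m1: "midpoint x u2 \<in> \<sigma>1" unfolding midpoint_def using rc_scale[OF r1 z1] by simp
    have m2: "midpoint x u2 \<in> \<sigma>2" unfolding midpoint_def using rc_scale[OF r2 z2] by simp
    have "x \<in> \<sigma>1 \<inter> \<sigma>2"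
      using face_ofD[OF F _ x _, of "midpoint x u2" u2] False m1 m2 u t1 by auto
    then show ?thesis by blast
  qed
qed

theorem propositionB3:
  fixes \<Sigma> :: "(real^'n) set set" and C :: "'c set" and fle :: "'c \<Rightarrow> 'c \<Rightarrow> bool"
    and prj :: "'c \<Rightarrow> (real^'n) set" and mu :: "'c \<Rightarrow> nat" and m :: "'c \<Rightarrow> real^'n"
    and \<tau> :: "(real^'n) set" and \<tau>' :: 'c
    and p :: "real^'n \<Rightarrow> real^'k" and \<iota> :: "real^'k \<Rightarrow> real^'n"
  assumes "tlms \<Sigma> C fle prj mu m"
    and "\<tau> \<in> \<Sigma>"
    and "quotient_data \<tau> p \<iota>"
    and "\<tau>' \<in> C" and "prj \<tau>' = \<tau>"
    and "separable \<Sigma> C fle prj m"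
  shows "separable (quotient_fan \<Sigma> \<tau> p) (loc_cones C fle \<tau>') (loc_fle C fle \<tau>')
           (loc_pi prj p) (loc_slope m \<iota>)"
proof -
  note T = assms(1)[unfolded tlms_def]
  have cf: "complete_fan \<Sigma>"
    using T by (elim conjE) assumption
  have fin: "finite C"
    using T by (elim conjE) assumption
  have dom: "\<forall>a b. fle a b \<longrightarrow> a \<in> C \<and> b \<in> C"
    using T by (elim conjE) assumption
  have refl: "\<forall>a\<in>C. fle a a"
    using T by (elim conjE) assumption
  have anti: "\<forall>a b. fle a b \<and> fle b a \<longrightarrow> a = b"
    using T by (elim conjE) assumption
  have tr: "\<forall>a b c. fle a b \<and> fle b c \<longrightarrow> fle a c"
    using T by (elim conjE) assumption
  have prjC0: "\<forall>c\<in>C. prj c \<in> \<Sigma>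
          \<and> bij_betw prj {d. fle d c} {\<rho>. \<rho> face_of prj c \<and> \<rho> \<noteq> {}}
          \<and> (\<forall>d1 d2. fle d1 c \<and> fle d2 c \<longrightarrow> (fle d1 d2 \<longleftrightarrow> prj d1 \<subseteq> prj d2))"
    using T by (elim conjE) assumption
  have cont: "\<forall>s1 s2 d. is_max_cone C fle s1 \<and> is_max_cone C fle s2 \<and> fle d s1 \<and> fle d s2
          \<longrightarrow> (\<forall>x\<in>prj d. m s1 \<bullet> x = m s2 \<bullet> x)"
    using T by (elim conjE) assumption
  have fan: "fan \<Sigma>" using cf unfolding complete_fan_def by (elim conjE)
  have prjC: "\<forall>c\<in>C. prj c \<in> \<Sigma> \<and> bij_betw prj {d. fle d c} {\<rho>. \<rho> face_of prj c \<and> \<rho> \<noteq> {}}"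
    using prjC0 by blast
  have Q: "linear p" "{x. p x = 0} = span \<tau>" "linear \<iota>" "\<forall>y. p (\<iota> y) = y"
    using assms(3) unfolding quotient_data_def by auto
  have RC: "\<forall>\<sigma>\<in>\<Sigma>. rat_cone \<sigma> \<and> \<sigma> \<inter> uminus ` \<sigma> = {0}"
    using fan unfolding fan_def by (elim conjE) assumption
  have rt: "rat_cone \<tau>" using RC assms(2) by blast
  have sub: "\<tau> \<subseteq> prj c" if "fle \<tau>' c" for c
  proof -
    have "c \<in> C" using dom that by blast
    then have "prj \<tau>' \<in> {\<rho>. \<rho> face_of prj c \<and> \<rho> \<noteq> {}}"
      using prjC that bij_betwE by fastforce
    then show ?thesis using assms(5) face_of_imp_subset by blast
  qed
  have phiS: "\<exists>s. is_max_cone C fle s \<and> fle c s \<and> (\<forall>z. phi_res C fle m c z = m s \<bullet> z)"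
    if "c \<in> C" for c
  proof -
    have ex: "\<exists>s. is_max_cone C fle s \<and> fle c s" using exists_max[OF fin dom refl anti tr that] .
    show ?thesis using someI_ex[OF ex] unfolding phi_res_def by blast
  qed
  have agree: "phi_res C fle m a z = phi_res C fle m b z"
    if h: "fle \<tau>' a" "fle \<tau>' b" "z \<in> span \<tau>" for a b z
  proof -
    obtain sa where sa: "is_max_cone C fle sa" "fle a sa" "\<forall>z. phi_res C fle m a z = m sa \<bullet> z"
      using phiS dom h by blast
    obtain sb where sb: "is_max_cone C fle sb" "fle b sb" "\<forall>z. phi_res C fle m b z = m sb \<bullet> z"
      using phiS dom h by blast
    have "fle \<tau>' sa" "fle \<tau>' sb" using tr sa sb h by blast+
    then have e: "\<forall>x\<in>\<tau>. m sa \<bullet> x = m sb \<bullet> x" using cont sa sb assms(5) by blast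
    obtain u1 u2 where u: "u1 \<in> \<tau>" "u2 \<in> \<tau>" "z = u1 - u2" using rc_span[OF rt h(3)] by blast
    show ?thesis using sa sb e u by (simp add: inner_diff_right)
  qed
  have loc_phi: "phi_res (loc_cones C fle \<tau>') (loc_fle C fle \<tau>') (loc_slope m \<iota>) c y
       = phi_res C fle m c (\<iota> y)" if "fle \<tau>' c" for c y
  proof -
    have "(\<lambda>s. is_max_cone (loc_cones C fle \<tau>') (loc_fle C fle \<tau>') s \<and> loc_fle C fle \<tau>' c s)
        = (\<lambda>s. is_max_cone C fle s \<and> fle c s)"
    proof (rule ext)
      fix s
      show "(is_max_cone (loc_cones C fle \<tau>') (loc_fle C fle \<tau>') s \<and> loc_fle C fle \<tau>' c s)
         = (is_max_cone C fle s \<and> fle c s)"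
        unfolding is_max_cone_def loc_cones_def loc_fle_def
        using that tr dom by blast
    qed
    then show ?thesis unfolding phi_res_def loc_slope_def dual_inner[OF Q(3)] by simp
  qed
  show ?thesis
    unfolding separable_def
  proof (intro ballI impI)
    fix \<rho> a b
    assume \<rho>: "\<rho> \<in> quotient_fan \<Sigma> \<tau> p" and a: "a \<in> loc_cones C fle \<tau>'" and b: "b \<in> loc_cones C fle \<tau>'"
      and h: "loc_pi prj p a = \<rho> \<and> loc_pi prj p b = \<rho> \<and> a \<noteq> b"
    have ta: "fle \<tau>' a" "a \<in> C" and tb: "fle \<tau>' b" "b \<in> C" using a b unfolding loc_cones_def by auto
    have pe: "p ` prj a = p ` prj b" using h unfolding loc_pi_def by auto
    have ia: "prj a \<in> \<Sigma>" and ib: "prj b \<in> \<Sigma>" using prjC ta tb by auto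
    have "prj a = prj b"
      using same_cone[OF fan ia ib rt sub[OF ta(1)] sub[OF tb(1)] Q(2) Q(1) pe]
        same_cone[OF fan ib ia rt sub[OF tb(1)] sub[OF ta(1)] Q(2) Q(1) pe[symmetric]] by blast
    then obtain x where x: "x \<in> prj a" "phi_res C fle m a x \<noteq> phi_res C fle m b x"
      using assms(6) ia ta tb h unfolding separable_def by blast
    define w where "w = x - \<iota> (p x)"
    have "p w = 0" unfolding w_def using linear_diff[OF Q(1)] Q(4) by simp
    then have w: "w \<in> span \<tau>" using Q(2) by blast
    have lc: "phi_res C fle m c (\<iota> (p x)) = phi_res C fle m c x - phi_res C fle m c w"
      if "c \<in> C" for c
      using phiS[OF that] unfolding w_def by (auto simp: inner_diff_right)
    have "phi_res C fle m a (\<iota> (p x)) \<noteq> phi_res C fle m b (\<iota> (p x))"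
      using lc[OF ta(2)] lc[OF tb(2)] agree[OF ta(1) tb(1) w] x(2) by simp
    moreover have "p x \<in> \<rho>" using h x(1) unfolding loc_pi_def by auto
    ultimately show "\<exists>y\<in>\<rho>. phi_res (loc_cones C fle \<tau>') (loc_fle C fle \<tau>') (loc_slope m \<iota>) a y
        \<noteq> phi_res (loc_cones C fle \<tau>') (loc_fle C fle \<tau>') (loc_slope m \<iota>) b y"
      using loc_phi[OF ta(1)] loc_phi[OF tb(1)] by metis
  qed
qed

end
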